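(* Let $\mathcal{H}_A$ and $\mathcal{H}_B$ be complex Hilbert spaces, let $\hat A$ be a bounded Hermitian operator on $\mathcal{H}_A\otimes\mathcal{H}_B$, and let $g_0$, $|a_0,b_0\rangle$ be a solution of the separability eigenvalue equations of $\hat A$. Then: (1) For any orthonormal bases $\{|a_k\rangle\}_{k}$ of $\mathcal{H}_A$ and $\{|b_l\rangle\}_{l}$ of $\mathcal{H}_B$ which contain $|a_0\rangle$ and $|b_0\rangle$ respectively (with index $0$), one has $\hat A|a_0,b_0\rangle=g_0|a_0,b_0\rangle+\sum_{k\neq0,\,l\neq0}\psi_{k,l}|a_k,b_l\rangle$ for some coefficients $\psi_{k,l}\in\mathbb{C}$; that is, the coefficient of $|a_0,b_0\rangle$ is $g_0$ and the coefficients of $|a_k,b_0\rangle$ ($k\neq0$) and $|a_0,b_l\rangle$ ($l\neq0$) vanish. (2) If $g_1\neq g_0$ and $g_1$, $|a_1,b_0\rangle$ is another solution, then $\langle a_0|a_1\rangle=0$; likewise, if $g_1\neq g_0$ and $g_1$, $|a_0,b_1\rangle$ is another solution, then $\langle b_0|b_1\rangle=0$. (3) If $g_1\neq g_0$ and $g_1$, $|a_1,b_1\rangle$ is another solution, then $|a_0,b_0\rangle$ and $|a_1,b_1\rangle$ are linearly independent.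
   Context: Notation: $|a,b\rangle=|a\rangle\otimes|b\rangle$. For $|a\rangle\in\mathcal{H}_A$, $\hat A_a=\langle a|\hat A|a\rangle$ denotes the operator on $\mathcal{H}_B$ with $\langle b'|\hat A_a|b\rangle=\langle a,b'|\hat A|a,b\rangle$; for $|b\rangle\in\mathcal{H}_B$, $\hat A_b=\langle b|\hat A|b\rangle$ denotes the operator on $\mathcal{H}_A$ with $\langle a'|\hat A_b|a\rangle=\langle a',b|\hat A|a,b\rangle$. A solution of the separability eigenvalue equations of $\hat A$ is a real number $g$ together with unit vectors $|a\rangle\in\mathcal{H}_A$, $|b\rangle\in\mathcal{H}_B$ such that $\hat A_b|a\rangle=g|a\rangle$ and $\hat A_a|b\rangle=g|b\rangle$; it is written $g,|a,b\rangle$. *)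

theory Defs
  imports "HOL-Analysis.Analysis" "HOL-Library.Function_Algebras"
begin

text \<open>A complex Hilbert space is modelled (up to unitary isomorphism) as l2 over an
  index type: square-summable functions from the index type to the complex numbers.
  The tensor product of l2 over 'i and l2 over 'j is l2 over the pair type.\<close>

definition l2 :: "('i \<Rightarrow> complex) set" where
  "l2 = {x. (\<lambda>i. (cmod (x i))^2) summable_on UNIV}"

definition l2_inner :: "('i \<Rightarrow> complex) \<Rightarrow> ('i \<Rightarrow> complex) \<Rightarrow> complex" where
  "l2_inner x y = (\<Sum>\<^sub>\<infinity>i. cnj (x i) * y i)"

definition l2_norm :: "('i \<Rightarrow> complex) \<Rightarrow> real" where
  "l2_norm x = sqrt (\<Sum>\<^sub>\<infinity>i. (cmod (x i))^2)"

definition tensor :: "('i \<Rightarrow> complex) \<Rightarrow> ('j \<Rightarrow> complex) \<Rightarrow> ('i \<times> 'j \<Rightarrow> complex)" where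
  "tensor a b = (\<lambda>(i,j). a i * b j)"

text \<open>Bounded linear operator on l2 (only its behaviour on l2 matters).\<close>
definition bounded_op :: "(('i \<Rightarrow> complex) \<Rightarrow> ('i \<Rightarrow> complex)) \<Rightarrow> bool" where
  "bounded_op T \<longleftrightarrow>
     (\<forall>x\<in>l2. T x \<in> l2) \<and>
     (\<forall>x\<in>l2. \<forall>y\<in>l2. T (x + y) = T x + T y) \<and>
     (\<forall>c. \<forall>x\<in>l2. T (\<lambda>i. c * x i) = (\<lambda>i. c * T x i)) \<and>
     (\<exists>C. \<forall>x\<in>l2. l2_norm (T x) \<le> C * l2_norm x)"

definition hermitian_op :: "(('i \<Rightarrow> complex) \<Rightarrow> ('i \<Rightarrow> complex)) \<Rightarrow> bool" where
  "hermitian_op T \<longleftrightarrow> bounded_op T \<and>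
     (\<forall>x\<in>l2. \<forall>y\<in>l2. l2_inner (T x) y = l2_inner x (T y))"

text \<open>Partial expectation values: the operator A_b on H_A (applied to a) with
  matrix elements <a'|A_b|a> = <a',b|A|a,b>, and A_a on H_B (applied to b).\<close>
definition partial_B ::
  "(('i \<times> 'j \<Rightarrow> complex) \<Rightarrow> ('i \<times> 'j \<Rightarrow> complex)) \<Rightarrow> ('j \<Rightarrow> complex) \<Rightarrow> ('i \<Rightarrow> complex) \<Rightarrow> ('i \<Rightarrow> complex)" where
  "partial_B A b a = (\<lambda>i. \<Sum>\<^sub>\<infinity>j. cnj (b j) * A (tensor a b) (i, j))"

definition partial_A ::
  "(('i \<times> 'j \<Rightarrow> complex) \<Rightarrow> ('i \<times> 'j \<Rightarrow> complex)) \<Rightarrow> ('i \<Rightarrow> complex) \<Rightarrow> ('j \<Rightarrow> complex) \<Rightarrow> ('j \<Rightarrow> complex)" where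
  "partial_A A a b = (\<lambda>j. \<Sum>\<^sub>\<infinity>i. cnj (a i) * A (tensor a b) (i, j))"

definition sep_eigen ::
  "(('i \<times> 'j \<Rightarrow> complex) \<Rightarrow> ('i \<times> 'j \<Rightarrow> complex)) \<Rightarrow> real \<Rightarrow> ('i \<Rightarrow> complex) \<Rightarrow> ('j \<Rightarrow> complex) \<Rightarrow> bool" where
  "sep_eigen A g a b \<longleftrightarrow>
     a \<in> l2 \<and> b \<in> l2 \<and> l2_norm a = 1 \<and> l2_norm b = 1 \<and>
     partial_B A b a = (\<lambda>i. complex_of_real g * a i) \<and>
     partial_A A a b = (\<lambda>j. complex_of_real g * b j)"

definition orthonormal_basis :: "('k \<Rightarrow> 'i \<Rightarrow> complex) \<Rightarrow> bool" where
  "orthonormal_basis e \<longleftrightarrow>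
     (\<forall>k. e k \<in> l2) \<and>
     (\<forall>k k'. l2_inner (e k) (e k') = (if k = k' then 1 else 0)) \<and>
     (\<forall>x\<in>l2. (\<forall>k. l2_inner (e k) x = 0) \<longrightarrow> x = 0)"

definition l2_sums :: "('k \<Rightarrow> 'i \<Rightarrow> complex) \<Rightarrow> 'k set \<Rightarrow> ('i \<Rightarrow> complex) \<Rightarrow> bool" where
  "l2_sums f S v \<longleftrightarrow> ((\<lambda>G. l2_norm (v - sum f G)) \<longlongrightarrow> 0) (finite_subsets_at_top S)"

end

theory Submission
  imports Defs
begin


lemma sum_fun_app: "(sum f A) x = (\<Sum>k\<in>A. f k x)"
  by (induct A rule: infinite_finite_induct) auto

definition nrm2 :: "('i \<Rightarrow> complex) \<Rightarrow> real" where
  "nrm2 x = (\<Sum>\<^sub>\<infinity>i. (cmod (x i))^2)"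

lemma l2_D: "x \<in> l2 \<Longrightarrow> (\<lambda>i. (cmod (x i))^2) summable_on UNIV"
  by (simp add: l2_def)

lemma l2_I: "(\<lambda>i. (cmod (x i))^2) summable_on UNIV \<Longrightarrow> x \<in> l2"
  by (simp add: l2_def)

lemma nrm2_nonneg: "nrm2 x \<ge> 0"
  unfolding nrm2_def by (rule infsum_nonneg) auto

lemma l2_norm_sq: "l2_norm x ^ 2 = nrm2 x"
  unfolding l2_norm_def nrm2_def[symmetric] using nrm2_nonneg by simp

lemma l2_norm_nrm2: "l2_norm x = sqrt (nrm2 x)"
  unfolding l2_norm_def nrm2_def ..

lemma l2_compare:
  assumes "g summable_on UNIV" "\<And>i. (cmod (x i))^2 \<le> g i"
  shows "x \<in> l2"
proof -
  have "(\<lambda>i. norm ((cmod (x i))^2)) summable_on UNIV"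
    by (rule Infinite_Sum.abs_summable_on_comparison_test'[OF assms(1)]) (use assms(2) in auto)
  then show ?thesis by (simp add: l2_def)
qed

lemma l2_add: assumes "x \<in> l2" "y \<in> l2" shows "x + y \<in> l2"
proof (rule l2_compare)
  show "(\<lambda>i. 2 * (cmod (x i))^2 + 2 * (cmod (y i))^2) summable_on UNIV"
    using assms by (intro summable_on_add summable_on_cmult_right) (auto dest: l2_D)
  fix i
  have "cmod (x i + y i) \<le> cmod (x i) + cmod (y i)" by (rule norm_triangle_ineq)
  hence "(cmod (x i + y i))^2 \<le> (cmod (x i) + cmod (y i))^2"
    by (simp add: power_mono)
  also have "\<dots> \<le> 2 * (cmod (x i))^2 + 2 * (cmod (y i))^2"
  proof -
    have "(cmod (x i) + cmod (y i))^2 = 2 * (cmod (x i))^2 + 2 * (cmod (y i))^2 - (cmod (x i) - cmod (y i))^2"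
      by (simp add: power2_eq_square algebra_simps)
    moreover have "0 \<le> (cmod (x i) - cmod (y i))^2" by simp
    ultimately show ?thesis by linarith
  qed
  finally show "(cmod ((x + y) i))^2 \<le> 2 * (cmod (x i))^2 + 2 * (cmod (y i))^2" by simp
qed

lemma l2_scale: assumes "x \<in> l2" shows "(\<lambda>i. c * x i) \<in> l2"
proof (rule l2_compare)
  show "(\<lambda>i. (cmod c)^2 * (cmod (x i))^2) summable_on UNIV"
    using assms by (intro summable_on_cmult_right) (auto dest: l2_D)
qed (simp add: norm_mult power_mult_distrib)

lemma l2_uminus: assumes "x \<in> l2" shows "- x \<in> l2"
  using l2_scale[OF assms, of "-1"] by (simp add: fun_Compl_def)

lemma l2_diff: assumes "x \<in> l2" "y \<in> l2" shows "x - y \<in> l2"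
  using l2_add[OF assms(1) l2_uminus[OF assms(2)]] by simp

lemma l2_zero: "(0 :: 'i \<Rightarrow> complex) \<in> l2"
  by (rule l2_I) simp

lemma l2_sum: "(\<And>k. k \<in> G \<Longrightarrow> y k \<in> l2) \<Longrightarrow> sum y G \<in> l2"
  by (induct G rule: infinite_finite_induct) (auto intro: l2_add l2_zero)

lemma inner_abs_summable:
  assumes "x \<in> l2" "y \<in> l2"
  shows "(\<lambda>i. norm (cnj (x i) * y i)) summable_on UNIV"
proof (rule Infinite_Sum.abs_summable_product)
  show "(\<lambda>i. norm (cnj (x i) * cnj (x i))) summable_on UNIV"
    using l2_D[OF assms(1)] by (simp add: norm_mult power2_eq_square)
  show "(\<lambda>i. norm (y i * y i)) summable_on UNIV"
    using l2_D[OF assms(2)] by (simp add: norm_mult power2_eq_square)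
qed

lemma inner_summable:
  assumes "x \<in> l2" "y \<in> l2"
  shows "(\<lambda>i. cnj (x i) * y i) summable_on UNIV"
  using abs_summable_summable[OF inner_abs_summable[OF assms]] .

lemma l2_inner_cnj: "l2_inner x y = cnj (l2_inner y x)"
  unfolding l2_inner_def by (subst infsum_cnj[symmetric]) (simp add: mult.commute)

lemma l2_inner_add_right:
  assumes "x \<in> l2" "y \<in> l2" "z \<in> l2"
  shows "l2_inner x (y + z) = l2_inner x y + l2_inner x z"
  unfolding l2_inner_def plus_fun_apply distrib_left
  by (rule infsum_add) (use assms in \<open>auto intro: inner_summable\<close>)

lemma l2_inner_scale_right:
  "l2_inner x (\<lambda>i. c * y i) = c * l2_inner x y"
  unfolding l2_inner_def by (simp add: infsum_cmult_right' mult.left_commute)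

lemma l2_inner_uminus_right:
  "l2_inner x (- y) = - l2_inner x y"
  using l2_inner_scale_right[of x "-1" y] by (simp add: fun_Compl_def)

lemma l2_inner_diff_right:
  assumes "x \<in> l2" "y \<in> l2" "z \<in> l2"
  shows "l2_inner x (y - z) = l2_inner x y - l2_inner x z"
  using l2_inner_add_right[OF assms(1,2) l2_uminus[OF assms(3)]] l2_inner_uminus_right[of x z]
  by simp

lemma l2_inner_sum_right:
  assumes "x \<in> l2" "\<And>k. k \<in> G \<Longrightarrow> y k \<in> l2"
  shows "l2_inner x (sum y G) = (\<Sum>k\<in>G. l2_inner x (y k))"
  using assms(2)
proof (induct G rule: infinite_finite_induct)
  case (infinite A) then show ?case by (simp add: l2_inner_def)
next
  case empty then show ?case by (simp add: l2_inner_def)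
next
  case (insert k F)
  have "l2_inner x (sum y (insert k F)) = l2_inner x (y k + sum y F)"
    using insert(1,2) by (metis sum.insert)
  also have "\<dots> = l2_inner x (y k) + l2_inner x (sum y F)"
    by (rule l2_inner_add_right) (use assms(1) insert in \<open>auto intro: l2_sum\<close>)
  also have "\<dots> = (\<Sum>k\<in>insert k F. l2_inner x (y k))" using insert by simp
  finally show ?case .
qed

lemma l2_inner_self: assumes "x \<in> l2" shows "l2_inner x x = complex_of_real (nrm2 x)"
proof -
  have "((\<lambda>i. (cmod (x i))^2) has_sum nrm2 x) UNIV"
    unfolding nrm2_def using l2_D[OF assms] by simp
  hence "((\<lambda>i. complex_of_real ((cmod (x i))^2)) has_sum complex_of_real (nrm2 x)) UNIV"
    by (rule has_sum_of_real)
  moreover have "\<And>i. complex_of_real ((cmod (x i))^2) = cnj (x i) * x i"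
    by (metis complex_norm_square mult.commute)
  ultimately show ?thesis unfolding l2_inner_def by (simp add: infsumI)
qed

lemma nrm2_zero: assumes "x \<in> l2" "nrm2 x = 0" shows "x = 0"
proof
  fix i
  have "(cmod (x i))^2 = 0"
    using nonneg_infsum_le_0D[of "\<lambda>i. (cmod (x i))^2" UNIV i] assms l2_D[OF assms(1)]
    by (auto simp: nrm2_def)
  then show "x i = 0 i" by simp
qed

lemma finite_le_nrm2: assumes "x \<in> l2" "finite F"
  shows "(\<Sum>i\<in>F. (cmod (x i))^2) \<le> nrm2 x"
  unfolding nrm2_def by (rule finite_sum_le_infsum) (use assms l2_D in auto)



lemma mult_cnj_of_real: "z * cnj z = complex_of_real ((cmod z)^2)"
  by (metis complex_norm_square)

lemma comb_l2:
  assumes el2: "\<And>k. e k \<in> l2"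
  shows "(\<Sum>k\<in>G. (\<lambda>x. d k * e k x)) \<in> l2"
  by (rule l2_sum) (use el2 in \<open>auto intro: l2_scale\<close>)

lemma comb_inner:
  assumes el2: "\<And>k. e k \<in> l2"
    and eon: "\<And>k k'. l2_inner (e k) (e k') = (if k = k' then 1 else 0)"
    and fin: "finite G"
  shows "l2_inner (e j) (\<Sum>k\<in>G. (\<lambda>x. d k * e k x)) = (if j \<in> G then d j else 0)"
proof -
  have "l2_inner (e j) (\<Sum>k\<in>G. (\<lambda>x. d k * e k x)) = (\<Sum>k\<in>G. l2_inner (e j) (\<lambda>x. d k * e k x))"
    by (rule l2_inner_sum_right) (use el2 in \<open>auto intro: l2_scale\<close>)
  also have "\<dots> = (\<Sum>k\<in>G. d k * (if j = k then 1 else 0))"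
    by (simp add: l2_inner_scale_right eon)
  also have "\<dots> = (if j \<in> G then d j else 0)"
  proof -
    have "(\<Sum>k\<in>G. d k * (if j = k then 1 else 0)) = (\<Sum>k\<in>G. if j = k then d k else 0)"
      by (rule sum.cong) auto
    then show ?thesis using fin by (simp add: sum.delta)
  qed
  finally show ?thesis .
qed

lemma comb_nrm2:
  assumes el2: "\<And>k. e k \<in> l2"
    and eon: "\<And>k k'. l2_inner (e k) (e k') = (if k = k' then 1 else 0)"
    and fin: "finite G"
  shows "nrm2 (\<Sum>k\<in>G. (\<lambda>x. d k * e k x)) = (\<Sum>k\<in>G. (cmod (d k))^2)"
proof -
  let ?u = "(\<Sum>k\<in>G. (\<lambda>x. d k * e k x))"
  have ul2: "?u \<in> l2" by (rule comb_l2[OF el2])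
  have "complex_of_real (nrm2 ?u) = l2_inner ?u ?u" by (simp add: l2_inner_self[OF ul2])
  also have "\<dots> = (\<Sum>k\<in>G. l2_inner ?u (\<lambda>x. d k * e k x))"
    by (rule l2_inner_sum_right[OF ul2]) (use el2 in \<open>auto intro: l2_scale\<close>)
  also have "\<dots> = (\<Sum>k\<in>G. d k * cnj (l2_inner (e k) ?u))"
    by (simp add: l2_inner_scale_right l2_inner_cnj[of ?u])
  also have "\<dots> = (\<Sum>k\<in>G. d k * cnj (d k))"
    by (rule sum.cong) (use comb_inner[OF el2 eon fin] in auto)
  also have "\<dots> = complex_of_real (\<Sum>k\<in>G. (cmod (d k))^2)"
    by (simp only: mult_cnj_of_real of_real_sum)
  finally show ?thesis by (simp only: of_real_eq_iff)
qed

lemma bessel_eq: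
  assumes el2: "\<And>k. e k \<in> l2"
    and eon: "\<And>k k'. l2_inner (e k) (e k') = (if k = k' then 1 else 0)"
    and fin: "finite G" and yl2: "y \<in> l2"
  shows "nrm2 (y - (\<Sum>k\<in>G. (\<lambda>x. l2_inner (e k) y * e k x))) = nrm2 y - (\<Sum>k\<in>G. (cmod (l2_inner (e k) y))^2)"
proof -
  define c where "c k = l2_inner (e k) y" for k
  let ?u = "(\<Sum>k\<in>G. (\<lambda>x. c k * e k x))"
  define P where "P = complex_of_real (\<Sum>k\<in>G. (cmod (c k))^2)"
  have ul2: "?u \<in> l2" by (rule comb_l2[OF el2])
  define r where "r = y - ?u"
  have rl2: "r \<in> l2" unfolding r_def using ul2 yl2 by (rule l2_diff[rotated])
  have yu: "l2_inner y ?u = P"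
  proof -
    have "l2_inner y ?u = (\<Sum>k\<in>G. l2_inner y (\<lambda>x. c k * e k x))"
      by (rule l2_inner_sum_right[OF yl2]) (use el2 in \<open>auto intro: l2_scale\<close>)
    also have "\<dots> = (\<Sum>k\<in>G. c k * cnj (c k))"
      by (simp add: l2_inner_scale_right l2_inner_cnj[of y] c_def)
    finally show ?thesis by (simp only: P_def mult_cnj_of_real of_real_sum)
  qed
  have uu: "l2_inner ?u ?u = P"
    using comb_nrm2[OF el2 eon fin, of c] l2_inner_self[OF ul2] by (simp add: P_def)
  have cP: "cnj P = P" by (simp add: P_def)
  have ry: "l2_inner r y = cnj (l2_inner y y - l2_inner y ?u)"
    by (subst l2_inner_cnj) (simp only: r_def l2_inner_diff_right[OF yl2 yl2 ul2])
  have ru: "l2_inner r ?u = cnj (l2_inner ?u y - l2_inner ?u ?u)"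
    by (subst l2_inner_cnj) (simp only: r_def l2_inner_diff_right[OF ul2 yl2 ul2])
  have uy: "l2_inner ?u y = cnj P" by (subst l2_inner_cnj) (simp only: yu)
  have "complex_of_real (nrm2 r) = l2_inner r r"
    by (simp add: l2_inner_self[OF rl2])
  also have "\<dots> = l2_inner r y - l2_inner r ?u"
    by (rule l2_inner_diff_right[OF rl2 yl2 ul2, folded r_def])
  also have "\<dots> = complex_of_real (nrm2 y) - P"
    unfolding ry ru uy yu uu using cP by (simp add: l2_inner_self[OF yl2])
  finally have "complex_of_real (nrm2 r) = complex_of_real (nrm2 y) - P" .
  hence "nrm2 r = nrm2 y - (\<Sum>k\<in>G. (cmod (c k))^2)"
    unfolding P_def by (simp only: of_real_diff[symmetric] of_real_eq_iff)
  then show ?thesis by (simp only: r_def c_def)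
qed

lemma bessel_single:
  assumes el2: "\<And>k. e k \<in> l2"
    and eon: "\<And>k k'. l2_inner (e k) (e k') = (if k = k' then 1 else 0)"
    and fin: "finite G" and yl2: "y \<in> l2"
  shows "(\<Sum>k\<in>G. (cmod (l2_inner (e k) y))^2) \<le> nrm2 y"
  using bessel_eq[OF el2 eon fin yl2] nrm2_nonneg[of "y - (\<Sum>k\<in>G. (\<lambda>x. l2_inner (e k) y * e k x))"]
  by linarith

lemma bessel_one:
  assumes el2: "\<And>k. e k \<in> l2"
    and eon: "\<And>k k'. l2_inner (e k) (e k') = (if k = k' then 1 else 0)"
    and yl2: "y \<in> l2"
  shows "(cmod (l2_inner (e j) y))^2 \<le> nrm2 y"
  using bessel_single[OF el2 eon _ yl2, of "{j}"] by simp



lemma has_sum_single_const: "((\<lambda>_. c) has_sum c) {x}"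
  using has_sum_finite[of "{x}" "\<lambda>_. c"] by simp

lemma delta_l2:
  fixes x :: 'x
  shows "(\<lambda>i. if i = x then 1 else 0 :: complex) \<in> l2"
    and "nrm2 (\<lambda>i. if i = x then 1 else 0 :: complex) = 1"
    and "l2_inner u (\<lambda>i. if i = x then 1 else 0 :: complex) = cnj (u x)"
proof -
  have h1: "((\<lambda>i. (cmod (if i = x then 1 else 0 :: complex))^2) has_sum 1) UNIV"
    by (subst has_sum_cong_neutral[where T="{x}" and g="\<lambda>_. 1"]) (auto intro: has_sum_single_const)
  then show "(\<lambda>i. if i = x then 1 else 0 :: complex) \<in> l2"
    by (auto simp: l2_def summable_on_def)
  show "nrm2 (\<lambda>i. if i = x then 1 else 0 :: complex) = 1"
    using h1 by (simp add: nrm2_def infsumI)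
  have "((\<lambda>i. cnj (u i) * (if i = x then 1 else 0)) has_sum cnj (u x)) UNIV"
    by (subst has_sum_cong_neutral[where T="{x}" and g="\<lambda>_. cnj (u x)"]) (auto intro: has_sum_single_const)
  then show "l2_inner u (\<lambda>i. if i = x then 1 else 0 :: complex) = cnj (u x)"
    by (simp add: l2_inner_def infsumI)
qed

lemma expansion:
  fixes e :: "'k \<Rightarrow> 'x \<Rightarrow> complex" and v :: "'x \<Rightarrow> complex" and S :: "'k set"
  assumes el2: "\<And>k. e k \<in> l2"
    and eon: "\<And>k k'. l2_inner (e k) (e k') = (if k = k' then 1 else 0)"
    and ecomp: "\<And>x. x \<in> l2 \<Longrightarrow> (\<forall>k. l2_inner (e k) x = 0) \<Longrightarrow> x = 0"
    and vl2: "v \<in> l2" and vout: "\<And>k. k \<notin> S \<Longrightarrow> l2_inner (e k) v = 0"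
  shows "l2_sums (\<lambda>k. (\<lambda>x. l2_inner (e k) v * e k x)) S v"
proof -
  define c where "c k = l2_inner (e k) v" for k
  define s where "s G = (\<Sum>k\<in>G. (\<lambda>x. c k * e k x))" for G
  have s_l2: "s G \<in> l2" for G unfolding s_def by (rule comb_l2[OF el2])
  have s_app: "s G x = (\<Sum>k\<in>G. c k * e k x)" for G x
    unfolding s_def sum_fun_app ..
  have bes: "(\<Sum>k\<in>G. (cmod (c k))^2) \<le> nrm2 v" if "finite G" for G
    unfolding c_def by (rule bessel_single[OF el2 eon that vl2])
  have summ: "(\<lambda>k. (cmod (c k))^2) summable_on S"
    by (rule nonneg_bdd_above_summable_on) (auto intro!: bdd_aboveI[where M="nrm2 v"] bes)
  define T where "T = (\<Sum>\<^sub>\<infinity>k\<in>S. (cmod (c k))^2)"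
  have hasT: "((\<lambda>k. (cmod (c k))^2) has_sum T) S" using summ by (simp add: T_def)
  have finT: "(\<Sum>k\<in>G. (cmod (c k))^2) \<le> T" if "finite G" "G \<subseteq> S" for G
    unfolding T_def by (rule finite_sum_le_infsum[OF summ that]) auto
  define tail where "tail G = T - (\<Sum>k\<in>G. (cmod (c k))^2)" for G
  have tail_lim: "(tail \<longlongrightarrow> 0) (finite_subsets_at_top S)"
  proof -
    have "((\<lambda>G. T - (\<Sum>k\<in>G. (cmod (c k))^2)) \<longlongrightarrow> T - T) (finite_subsets_at_top S)"
      by (intro tendsto_diff tendsto_const) (use hasT in \<open>simp add: has_sum_def\<close>)
    then show ?thesis by (simp add: tail_def[abs_def])
  qed
  have ex_summ: "(\<lambda>k. (cmod (e k x))^2) summable_on S" for x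
  proof (rule nonneg_bdd_above_summable_on)
    show "bdd_above (sum (\<lambda>k. (cmod (e k x))^2) ` {F. F \<subseteq> S \<and> finite F})"
    proof (rule bdd_aboveI[where M=1], clarsimp)
      fix F :: "'k set" assume "finite F"
      have "(\<Sum>k\<in>F. (cmod (l2_inner (e k) (\<lambda>i. if i = x then 1 else 0)))^2) \<le> nrm2 (\<lambda>i. if i = x then 1 else 0 :: complex)"
        by (rule bessel_single[OF el2 eon \<open>finite F\<close> delta_l2(1)])
      then show "(\<Sum>k\<in>F. (cmod (e k x))^2) \<le> 1"
        by (simp add: delta_l2(2,3))
    qed
  qed auto
  have summ_x: "(\<lambda>k. c k * e k x) summable_on S" for x
  proof (rule abs_summable_summable)
    show "(\<lambda>k. norm (c k * e k x)) summable_on S"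
    proof (rule Infinite_Sum.abs_summable_product)
      show "(\<lambda>k. norm (c k * c k)) summable_on S" using summ by (simp add: norm_mult power2_eq_square)
      show "(\<lambda>k. norm (e k x * e k x)) summable_on S" using ex_summ[of x] by (simp add: norm_mult power2_eq_square)
    qed
  qed
  define f where "f x = (\<Sum>\<^sub>\<infinity>k\<in>S. c k * e k x)" for x
  have f_lim: "((\<lambda>G. s G x) \<longlongrightarrow> f x) (finite_subsets_at_top S)" for x
    unfolding s_app f_def using infsum_tendsto[OF summ_x[of x]] by simp
  have claimF: "(\<Sum>x\<in>F. (cmod (f x - s G x))^2) \<le> tail G"
    if G: "finite G" "G \<subseteq> S" and F: "finite F" for G F
  proof (rule tendsto_upperbound)
    show "((\<lambda>H. \<Sum>x\<in>F. (cmod (s H x - s G x))^2) \<longlongrightarrow> (\<Sum>x\<in>F. (cmod (f x - s G x))^2)) (finite_subsets_at_top S)"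
      by (intro tendsto_intros f_lim)
    show "finite_subsets_at_top S \<noteq> bot" by simp
    show "\<forall>\<^sub>F H in finite_subsets_at_top S. (\<Sum>x\<in>F. (cmod (s H x - s G x))^2) \<le> tail G"
      unfolding eventually_finite_subsets_at_top
    proof (intro exI[of _ G] conjI allI impI)
      fix H assume H: "finite H \<and> G \<subseteq> H \<and> H \<subseteq> S"
      have shg: "s H - s G = (\<Sum>k\<in>H-G. (\<lambda>x. c k * e k x))"
        using H G unfolding s_def by (simp add: sum.subset_diff[of G H])
      have "(\<Sum>x\<in>F. (cmod (s H x - s G x))^2) = (\<Sum>x\<in>F. (cmod ((s H - s G) x))^2)" by simp
      also have "\<dots> \<le> nrm2 (s H - s G)"
        by (rule finite_le_nrm2[OF l2_diff[OF s_l2 s_l2] F])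
      also have "\<dots> = (\<Sum>k\<in>H-G. (cmod (c k))^2)"
        unfolding shg by (rule comb_nrm2[OF el2 eon]) (use H in auto)
      also have "\<dots> = (\<Sum>k\<in>H. (cmod (c k))^2) - (\<Sum>k\<in>G. (cmod (c k))^2)"
        using H G by (simp add: sum_diff)
      also have "\<dots> \<le> tail G"
        unfolding tail_def using finT[of H] H by simp
      finally show "(\<Sum>x\<in>F. (cmod (s H x - s G x))^2) \<le> tail G" .
    qed (use G in auto)
  qed
  have claimC: "f - s G \<in> l2 \<and> nrm2 (f - s G) \<le> tail G" if G: "finite G" "G \<subseteq> S" for G
  proof -
    have sm: "(\<lambda>x. (cmod ((f - s G) x))^2) summable_on UNIV"
      by (rule nonneg_bdd_above_summable_on) (auto intro!: bdd_aboveI[where M="tail G"] claimF[OF G])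
    moreover have "nrm2 (f - s G) \<le> tail G"
      unfolding nrm2_def by (rule infsum_le_finite_sums[OF sm]) (use claimF[OF G] in auto)
    ultimately show ?thesis by (simp add: l2_def)
  qed
  have s0: "s {} = 0" by (simp add: s_def)
  have fl2: "f \<in> l2" using claimC[of "{}"] by (simp add: s0)
  define w where "w = v - f"
  have wl2: "w \<in> l2" unfolding w_def by (rule l2_diff[OF vl2 fl2])
  have w0: "l2_inner (e j) w = 0" for j
  proof -
    have "(cmod (l2_inner (e j) w))^2 \<le> 0"
    proof (rule tendsto_lowerbound[OF tail_lim])
      show "finite_subsets_at_top S \<noteq> bot" by simp
      show "\<forall>\<^sub>F G in finite_subsets_at_top S. (cmod (l2_inner (e j) w))^2 \<le> tail G"
        unfolding eventually_finite_subsets_at_top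
      proof (intro exI[of _ "{j} \<inter> S"] conjI allI impI)
        fix G assume G: "finite G \<and> {j} \<inter> S \<subseteq> G \<and> G \<subseteq> S"
        have C: "f - s G \<in> l2" "nrm2 (f - s G) \<le> tail G" using claimC[of G] G by auto
        have "l2_inner (e j) (v - s G) = c j - l2_inner (e j) (s G)"
          by (rule l2_inner_diff_right[OF el2 vl2 s_l2, folded c_def])
        also have "l2_inner (e j) (s G) = (if j \<in> G then c j else 0)"
          unfolding s_def using G by (intro comb_inner[OF el2 eon]) auto
        also have "c j - (if j \<in> G then c j else 0) = 0"
          using G vout[of j] by (auto simp: c_def)
        finally have z: "l2_inner (e j) (v - s G) = 0" .
        have eqw: "w = (v - s G) - (f - s G)" unfolding w_def by simp
        have "l2_inner (e j) w = l2_inner (e j) (v - s G) - l2_inner (e j) (f - s G)"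
          unfolding eqw by (rule l2_inner_diff_right[OF el2 l2_diff[OF vl2 s_l2] C(1)])
        hence "l2_inner (e j) w = - l2_inner (e j) (f - s G)" using z by simp
        hence "(cmod (l2_inner (e j) w))^2 = (cmod (l2_inner (e j) (f - s G)))^2" by simp
        also have "\<dots> \<le> nrm2 (f - s G)" by (rule bessel_one[OF el2 eon C(1)])
        finally show "(cmod (l2_inner (e j) w))^2 \<le> tail G" using C(2) by linarith
      qed auto
    qed
    then show ?thesis by simp
  qed
  have "w = 0" using ecomp[OF wl2] w0 by blast
  hence vf: "v = f" unfolding w_def by simp
  show ?thesis unfolding l2_sums_def
  proof (rule tendsto_sandwich[where f="\<lambda>_. 0" and h="\<lambda>G. sqrt (tail G)"])
    show "\<forall>\<^sub>F G in finite_subsets_at_top S. 0 \<le> l2_norm (v - sum (\<lambda>k x. l2_inner (e k) v * e k x) G)"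
      by (simp add: l2_norm_nrm2 nrm2_nonneg)
    show "\<forall>\<^sub>F G in finite_subsets_at_top S. l2_norm (v - sum (\<lambda>k x. l2_inner (e k) v * e k x) G) \<le> sqrt (tail G)"
    proof (rule eventually_finite_subsets_at_top_weakI)
      fix G assume G: "finite G" "G \<subseteq> S"
      have "sum (\<lambda>k x. l2_inner (e k) v * e k x) G = s G" by (simp add: s_def c_def)
      then show "l2_norm (v - sum (\<lambda>k x. l2_inner (e k) v * e k x) G) \<le> sqrt (tail G)"
        using claimC[OF G] vf by (simp add: l2_norm_nrm2)
    qed
    show "((\<lambda>_. 0) \<longlongrightarrow> 0) (finite_subsets_at_top S)" by simp
    show "((\<lambda>G. sqrt (tail G)) \<longlongrightarrow> 0) (finite_subsets_at_top S)"
      using tendsto_real_sqrt[OF tail_lim] by simp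
  qed
qed



lemma tensor_app[simp]: "tensor a b (i, j) = a i * b j"
  by (simp add: tensor_def)

lemma tensor_l2:
  assumes "a \<in> l2" "b \<in> l2"
  shows "tensor a b \<in> l2"
proof (rule l2_I)
  have hb: "((\<lambda>j. (cmod (b j))^2) has_sum nrm2 b) UNIV"
    using l2_D[OF assms(2)] by (simp add: nrm2_def)
  have "(\<lambda>p. (cmod (tensor a b p))^2) summable_on Sigma UNIV (\<lambda>_. UNIV)"
  proof (rule summable_on_SigmaI[where g="\<lambda>i. (cmod (a i))^2 * nrm2 b"])
    fix i :: 'a
    show "((\<lambda>j. (cmod (tensor a b (i, j)))^2) has_sum (cmod (a i))^2 * nrm2 b) UNIV"
      using has_sum_cmult_right[OF hb, of "(cmod (a i))^2"] by (simp add: norm_mult power_mult_distrib)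
  next
    show "(\<lambda>i. (cmod (a i))^2 * nrm2 b) summable_on UNIV"
      using l2_D[OF assms(1)] by (rule summable_on_cmult_left)
  qed auto
  then show "(\<lambda>p. (cmod (tensor a b p))^2) summable_on UNIV" by simp
qed

lemma tensor_fubini:
  assumes al2: "a \<in> l2" and bl2: "b \<in> l2" and wl2: "w \<in> l2"
  shows "l2_inner (tensor a b) w = (\<Sum>\<^sub>\<infinity>i. cnj (a i) * (\<Sum>\<^sub>\<infinity>j. cnj (b j) * w (i, j)))"
    and "l2_inner (tensor a b) w = (\<Sum>\<^sub>\<infinity>j. cnj (b j) * (\<Sum>\<^sub>\<infinity>i. cnj (a i) * w (i, j)))"
proof -
  define h where "h p = cnj (tensor a b p) * w p" for p
  have hs: "h summable_on UNIV" unfolding h_def by (rule inner_summable[OF tensor_l2[OF al2 bl2] wl2])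
  have hxy: "h (x, y) = cnj (a x) * (cnj (b y) * w (x, y))" for x y
    by (simp add: h_def)
  have "l2_inner (tensor a b) w = infsum h UNIV" unfolding l2_inner_def h_def ..
  also have "\<dots> = infsum h (Sigma UNIV (\<lambda>_. UNIV))" by simp
  also have "\<dots> = (\<Sum>\<^sub>\<infinity>x. \<Sum>\<^sub>\<infinity>y. h (x, y))"
    by (rule infsum_Sigma_banach[symmetric]) (use hs in simp)
  finally have 1: "l2_inner (tensor a b) w = (\<Sum>\<^sub>\<infinity>x. \<Sum>\<^sub>\<infinity>y. h (x, y))" .
  then show "l2_inner (tensor a b) w = (\<Sum>\<^sub>\<infinity>i. cnj (a i) * (\<Sum>\<^sub>\<infinity>j. cnj (b j) * w (i, j)))"
    by (simp add: hxy infsum_cmult_right')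
  have "(\<Sum>\<^sub>\<infinity>x. \<Sum>\<^sub>\<infinity>y. h (x, y)) = (\<Sum>\<^sub>\<infinity>y. \<Sum>\<^sub>\<infinity>x. h (x, y))"
    by (rule infsum_swap_banach) (use hs in simp)
  also have "\<dots> = (\<Sum>\<^sub>\<infinity>j. cnj (b j) * (\<Sum>\<^sub>\<infinity>i. cnj (a i) * w (i, j)))"
  proof -
    have "h (x, y) = cnj (b y) * (cnj (a x) * w (x, y))" for x y by (simp add: h_def)
    then show ?thesis by (simp add: infsum_cmult_right')
  qed
  finally show "l2_inner (tensor a b) w = (\<Sum>\<^sub>\<infinity>j. cnj (b j) * (\<Sum>\<^sub>\<infinity>i. cnj (a i) * w (i, j)))"
    using 1 by simp
qed

lemma inner_pB:
  assumes "a \<in> l2" "b \<in> l2" "w \<in> l2"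
    and "(\<lambda>i. \<Sum>\<^sub>\<infinity>j. cnj (b j) * w (i, j)) = (\<lambda>i. c * a' i)"
  shows "l2_inner (tensor a b) w = c * l2_inner a a'"
proof -
  have "l2_inner (tensor a b) w = (\<Sum>\<^sub>\<infinity>i. cnj (a i) * (c * a' i))"
    using tensor_fubini(1)[OF assms(1-3)] assms(4) by (simp add: fun_eq_iff)
  also have "\<dots> = c * l2_inner a a'"
    using l2_inner_scale_right[of a c a'] by (simp add: l2_inner_def)
  finally show ?thesis .
qed

lemma inner_pA:
  assumes "a \<in> l2" "b \<in> l2" "w \<in> l2"
    and "(\<lambda>j. \<Sum>\<^sub>\<infinity>i. cnj (a i) * w (i, j)) = (\<lambda>j. c * b' j)"
  shows "l2_inner (tensor a b) w = c * l2_inner b b'"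
proof -
  have "l2_inner (tensor a b) w = (\<Sum>\<^sub>\<infinity>j. cnj (b j) * (c * b' j))"
    using tensor_fubini(2)[OF assms(1-3)] assms(4) by (simp add: fun_eq_iff)
  also have "\<dots> = c * l2_inner b b'"
    using l2_inner_scale_right[of b c b'] by (simp add: l2_inner_def)
  finally show ?thesis .
qed

lemma tensor_inner_tensor:
  assumes "a \<in> l2" "b \<in> l2" "a' \<in> l2" "b' \<in> l2"
  shows "l2_inner (tensor a b) (tensor a' b') = l2_inner a a' * l2_inner b b'"
proof -
  have "(\<lambda>i. \<Sum>\<^sub>\<infinity>j. cnj (b j) * tensor a' b' (i, j)) = (\<lambda>i. l2_inner b b' * a' i)"
  proof
    fix i
    have "(\<Sum>\<^sub>\<infinity>j. cnj (b j) * tensor a' b' (i, j)) = (\<Sum>\<^sub>\<infinity>j. a' i * (cnj (b j) * b' j))"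
      by (simp add: mult_ac)
    also have "\<dots> = a' i * l2_inner b b'" by (simp add: infsum_cmult_right' l2_inner_def)
    finally show "(\<Sum>\<^sub>\<infinity>j. cnj (b j) * tensor a' b' (i, j)) = l2_inner b b' * a' i" by simp
  qed
  from inner_pB[OF assms(1,2) tensor_l2[OF assms(3,4)] this] show ?thesis by simp
qed



lemma onb_D:
  assumes "orthonormal_basis e"
  shows "\<And>k. e k \<in> l2" "\<And>k k'. l2_inner (e k) (e k') = (if k = k' then 1 else 0)"
    "\<And>x. x \<in> l2 \<Longrightarrow> (\<forall>k. l2_inner (e k) x = 0) \<Longrightarrow> x = 0"
  using assms unfolding orthonormal_basis_def by blast+

lemma tensor_complete:
  fixes ea :: "'k \<Rightarrow> 'i \<Rightarrow> complex" and eb :: "'l \<Rightarrow> 'j \<Rightarrow> complex"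
  assumes ea: "orthonormal_basis ea" and eb: "orthonormal_basis eb"
    and wl2: "w \<in> l2" and orth: "\<forall>k l. l2_inner (tensor (ea k) (eb l)) w = 0"
  shows "w = 0"
proof -
  note eal2 = onb_D(1)[OF ea] and eaon = onb_D(2)[OF ea] and eacomp = onb_D(3)[OF ea]
  note ebl2 = onb_D(1)[OF eb] and ebon = onb_D(2)[OF eb] and ebcomp = onb_D(3)[OF eb]
  have sw: "(\<lambda>(x, y). (cmod (w (x, y)))^2) summable_on Sigma UNIV (\<lambda>_. UNIV)"
  proof -
    have "(\<lambda>(x, y). (cmod (w (x, y)))^2) = (\<lambda>p. (cmod (w p))^2)" by auto
    then show ?thesis using l2_D[OF wl2] by simp
  qed
  have wi: "(\<lambda>j. w (i, j)) \<in> l2" for i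
    using summable_on_SigmaD1[OF sw, of i] by (simp add: l2_def)
  have nsum: "(\<lambda>i. nrm2 (\<lambda>j. w (i, j))) summable_on UNIV"
  proof -
    have "(\<lambda>x. \<Sum>\<^sub>\<infinity>y. (cmod (w (x, y)))^2) summable_on UNIV"
      using summable_on_SigmaD[of "\<lambda>p. (cmod (w p))^2" UNIV "\<lambda>_. UNIV"] l2_D[OF wl2] l2_D[OF wi]
      by simp
    then show ?thesis by (simp add: nrm2_def)
  qed
  define u where "u l i = l2_inner (eb l) (\<lambda>j. w (i, j))" for l i
  have ul2: "u l \<in> l2" for l
    by (rule l2_compare[OF nsum]) (unfold u_def, rule bessel_one[OF ebl2 ebon wi])
  have u0: "u l = 0" for l
  proof (rule eacomp[OF ul2], rule allI)
    fix k
    have "l2_inner (ea k) (u l) = l2_inner (tensor (ea k) (eb l)) w"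
      unfolding tensor_fubini(1)[OF eal2 ebl2 wl2] by (simp add: l2_inner_def u_def)
    then show "l2_inner (ea k) (u l) = 0" using orth by simp
  qed
  have "(\<lambda>j. w (i, j)) = 0" for i
    by (rule ebcomp[OF wi]) (use u0 in \<open>auto simp: u_def fun_eq_iff\<close>)
  then show "w = 0" by (auto simp: fun_eq_iff)
qed

lemma sep_eigen_D:
  assumes "sep_eigen A g a b"
  shows "a \<in> l2" "b \<in> l2" "nrm2 a = 1" "nrm2 b = 1"
    "(\<lambda>i. \<Sum>\<^sub>\<infinity>j. cnj (b j) * A (tensor a b) (i, j)) = (\<lambda>i. complex_of_real g * a i)"
    "(\<lambda>j. \<Sum>\<^sub>\<infinity>i. cnj (a i) * A (tensor a b) (i, j)) = (\<lambda>j. complex_of_real g * b j)"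
  using assms l2_norm_sq[of a] l2_norm_sq[of b]
  unfolding sep_eigen_def partial_A_def partial_B_def by auto

lemma herm_D:
  assumes "hermitian_op A"
  shows "\<And>x. x \<in> l2 \<Longrightarrow> A x \<in> l2"
    "\<And>x y. x \<in> l2 \<Longrightarrow> y \<in> l2 \<Longrightarrow> l2_inner (A x) y = l2_inner x (A y)"
    "\<And>c x. x \<in> l2 \<Longrightarrow> A (\<lambda>i. c * x i) = (\<lambda>i. c * A x i)"
  using assms unfolding hermitian_op_def bounded_op_def by blast+

lemma self_one: "x \<in> l2 \<Longrightarrow> nrm2 x = 1 \<Longrightarrow> l2_inner x x = 1"
  by (simp add: l2_inner_self)

lemma part1:
  fixes A :: "('i \<times> 'j \<Rightarrow> complex) \<Rightarrow> ('i \<times> 'j \<Rightarrow> complex)"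
    and ea :: "'k \<Rightarrow> 'i \<Rightarrow> complex" and eb :: "'l \<Rightarrow> 'j \<Rightarrow> complex"
  assumes herm: "hermitian_op A" and sol0: "sep_eigen A g0 a0 b0"
    and ea: "orthonormal_basis ea" and eb: "orthonormal_basis eb"
    and k0: "ea k0 = a0" and l0: "eb l0 = b0"
  shows "\<exists>\<psi> :: 'k \<Rightarrow> 'l \<Rightarrow> complex.
               l2_sums (\<lambda>(k, l). (\<lambda>x. \<psi> k l * tensor (ea k) (eb l) x))
                       ({k. k \<noteq> k0} \<times> {l. l \<noteq> l0})
                       (A (tensor a0 b0) - (\<lambda>x. complex_of_real g0 * tensor a0 b0 x))"
proof -
  note eal2 = onb_D(1)[OF ea] and eaon = onb_D(2)[OF ea]
  note ebl2 = onb_D(1)[OF eb] and ebon = onb_D(2)[OF eb]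
  note S = sep_eigen_D[OF sol0]
  define t where "t = tensor a0 b0"
  have tl2: "t \<in> l2" unfolding t_def by (rule tensor_l2[OF S(1,2)])
  have Atl2: "A t \<in> l2" by (rule herm_D(1)[OF herm tl2])
  have gtl2: "(\<lambda>x. complex_of_real g0 * t x) \<in> l2" by (rule l2_scale[OF tl2])
  define v where "v = A t - (\<lambda>x. complex_of_real g0 * t x)"
  have vl2: "v \<in> l2" unfolding v_def by (rule l2_diff[OF Atl2 gtl2])
  define e where "e p = tensor (ea (fst p)) (eb (snd p))" for p
  define SS where "SS = {k. k \<noteq> k0} \<times> {l. l \<noteq> l0}"
  have el2: "e p \<in> l2" for p unfolding e_def by (rule tensor_l2[OF eal2 ebl2])
  have eon: "l2_inner (e p) (e q) = (if p = q then 1 else 0)" for p q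
    unfolding e_def by (simp add: tensor_inner_tensor[OF eal2 ebl2 eal2 ebl2] eaon ebon prod_eq_iff)
  have ecomp: "x = 0" if "x \<in> l2" "\<forall>p. l2_inner (e p) x = 0" for x
    by (rule tensor_complete[OF ea eb that(1)]) (use that(2) in \<open>auto simp: e_def\<close>)
  have inner_v: "l2_inner (e p) v = l2_inner (e p) (A t) - complex_of_real g0 * l2_inner (e p) t" for p
    unfolding v_def by (simp add: l2_inner_diff_right[OF el2 Atl2 gtl2] l2_inner_scale_right)
  have vout: "l2_inner (e p) v = 0" if "p \<notin> SS" for p
  proof -
    obtain k l where p: "p = (k, l)" by (cases p)
    have "k = k0 \<or> l = l0" using that by (auto simp: SS_def p)
    then show ?thesis
    proof
      assume "l = l0"
      hence ep: "e p = tensor (ea k) b0" by (simp add: e_def p l0)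
      have "l2_inner (e p) (A t) = complex_of_real g0 * l2_inner (ea k) a0"
        unfolding ep by (rule inner_pB[OF eal2 S(2) Atl2]) (use S(5) in \<open>simp add: t_def\<close>)
      moreover have "l2_inner (e p) t = l2_inner (ea k) a0"
        unfolding ep t_def by (simp add: tensor_inner_tensor[OF eal2 S(2) S(1) S(2)] self_one[OF S(2,4)])
      ultimately show ?thesis by (simp add: inner_v)
    next
      assume "k = k0"
      hence ep: "e p = tensor a0 (eb l)" by (simp add: e_def p k0)
      have "l2_inner (e p) (A t) = complex_of_real g0 * l2_inner (eb l) b0"
        unfolding ep by (rule inner_pA[OF S(1) ebl2 Atl2]) (use S(6) in \<open>simp add: t_def\<close>)
      moreover have "l2_inner (e p) t = l2_inner (eb l) b0"
        unfolding ep t_def by (simp add: tensor_inner_tensor[OF S(1) ebl2 S(1) S(2)] self_one[OF S(1,3)])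
      ultimately show ?thesis by (simp add: inner_v)
    qed
  qed
  have exp: "l2_sums (\<lambda>p. (\<lambda>x. l2_inner (e p) v * e p x)) SS v"
    by (rule expansion[OF el2 eon ecomp vl2 vout]) auto
  define \<psi> where "\<psi> k l = l2_inner (e (k, l)) v" for k l
  have feq: "(\<lambda>p. (\<lambda>x. l2_inner (e p) v * e p x)) =
     (\<lambda>(k, l). (\<lambda>x. \<psi> k l * tensor (ea k) (eb l) x))"
    by (auto simp: fun_eq_iff e_def \<psi>_def)
  from exp have "l2_sums (\<lambda>(k, l). (\<lambda>x. \<psi> k l * tensor (ea k) (eb l) x)) SS v"
    by (simp only: feq)
  then show ?thesis unfolding SS_def v_def t_def by blast
qed

lemma part2:
  assumes herm: "hermitian_op A" and sol0: "sep_eigen A g0 a0 b0"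
    and ne: "g1 \<noteq> g0" and sol1: "sep_eigen A g1 a1 b0"
  shows "l2_inner a0 a1 = 0"
proof -
  note S0 = sep_eigen_D[OF sol0] and S1 = sep_eigen_D[OF sol1]
  have t0: "tensor a0 b0 \<in> l2" by (rule tensor_l2[OF S0(1,2)])
  have t1: "tensor a1 b0 \<in> l2" by (rule tensor_l2[OF S1(1,2)])
  have X: "l2_inner (tensor a0 b0) (A (tensor a1 b0)) = complex_of_real g1 * l2_inner a0 a1"
    by (rule inner_pB[OF S0(1,2) herm_D(1)[OF herm t1] S1(5)])
  have Y: "l2_inner (tensor a1 b0) (A (tensor a0 b0)) = complex_of_real g0 * l2_inner a1 a0"
    by (rule inner_pB[OF S1(1,2) herm_D(1)[OF herm t0] S0(5)])
  have "l2_inner (tensor a0 b0) (A (tensor a1 b0)) = l2_inner (A (tensor a0 b0)) (tensor a1 b0)"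
    using herm_D(2)[OF herm t0 t1] by simp
  also have "\<dots> = cnj (l2_inner (tensor a1 b0) (A (tensor a0 b0)))" by (rule l2_inner_cnj)
  also have "\<dots> = complex_of_real g0 * l2_inner a0 a1"
    unfolding Y by (simp add: l2_inner_cnj[of a1 a0])
  finally have "complex_of_real g1 * l2_inner a0 a1 = complex_of_real g0 * l2_inner a0 a1"
    using X by simp
  then show ?thesis using ne by simp
qed

lemma part3:
  assumes herm: "hermitian_op A" and sol0: "sep_eigen A g0 a0 b0"
    and ne: "g1 \<noteq> g0" and sol1: "sep_eigen A g1 a0 b1"
  shows "l2_inner b0 b1 = 0"
proof -
  note S0 = sep_eigen_D[OF sol0] and S1 = sep_eigen_D[OF sol1]
  have t0: "tensor a0 b0 \<in> l2" by (rule tensor_l2[OF S0(1,2)])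
  have t1: "tensor a0 b1 \<in> l2" by (rule tensor_l2[OF S1(1,2)])
  have X: "l2_inner (tensor a0 b0) (A (tensor a0 b1)) = complex_of_real g1 * l2_inner b0 b1"
    by (rule inner_pA[OF S0(1,2) herm_D(1)[OF herm t1] S1(6)])
  have Y: "l2_inner (tensor a0 b1) (A (tensor a0 b0)) = complex_of_real g0 * l2_inner b1 b0"
    by (rule inner_pA[OF S1(1,2) herm_D(1)[OF herm t0] S0(6)])
  have "l2_inner (tensor a0 b0) (A (tensor a0 b1)) = l2_inner (A (tensor a0 b0)) (tensor a0 b1)"
    using herm_D(2)[OF herm t0 t1] by simp
  also have "\<dots> = cnj (l2_inner (tensor a0 b1) (A (tensor a0 b0)))" by (rule l2_inner_cnj)
  also have "\<dots> = complex_of_real g0 * l2_inner b0 b1"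
    unfolding Y by (simp add: l2_inner_cnj[of b1 b0])
  finally have "complex_of_real g1 * l2_inner b0 b1 = complex_of_real g0 * l2_inner b0 b1"
    using X by simp
  then show ?thesis using ne by simp
qed



lemma nonzero_entry:
  assumes "nrm2 x = 1" shows "\<exists>i. x i \<noteq> 0"
proof (rule ccontr)
  assume "\<not> (\<exists>i. x i \<noteq> 0)"
  hence "x = (\<lambda>_. 0)" by auto
  hence "nrm2 x = 0" by (simp add: nrm2_def)
  with assms show False by simp
qed

lemma nrm2_scale: "nrm2 (\<lambda>j. c * x j) = (cmod c)^2 * nrm2 x"
  unfolding nrm2_def by (simp add: norm_mult power_mult_distrib infsum_cmult_right')

lemma part4:
  assumes herm: "hermitian_op A" and sol0: "sep_eigen A g0 a0 b0"
    and ne: "g1 \<noteq> g0" and sol1: "sep_eigen A g1 a1 b1"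
    and H: "(\<lambda>x. c * tensor a0 b0 x + d * tensor a1 b1 x) = 0"
  shows "c = 0 \<and> d = 0"
proof -
  note S0 = sep_eigen_D[OF sol0] and S1 = sep_eigen_D[OF sol1]
  obtain i0 where i0: "a0 i0 \<noteq> 0" using nonzero_entry[OF S0(3)] by blast
  obtain j0 where j0: "b0 j0 \<noteq> 0" using nonzero_entry[OF S0(4)] by blast
  obtain i1 where i1: "a1 i1 \<noteq> 0" using nonzero_entry[OF S1(3)] by blast
  obtain j1 where j1: "b1 j1 \<noteq> 0" using nonzero_entry[OF S1(4)] by blast
  have Hp: "c * (a0 i * b0 j) + d * (a1 i * b1 j) = 0" for i j
    using fun_cong[OF H, of "(i, j)"] by simp
  have d0: "d = 0"
  proof (rule ccontr)
    assume dn: "d \<noteq> 0"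
    define \<mu> where "\<mu> = - c / d"
    have Hm: "a1 i * b1 j = \<mu> * (a0 i * b0 j)" for i j
      using Hp[of i j] dn unfolding \<mu>_def by (simp add: field_simps) (metis add.commute add_eq_0_iff mult.commute mult.left_commute)
    define \<beta> where "\<beta> = \<mu> * a0 i1 / a1 i1"
    define \<alpha> where "\<alpha> = \<mu> * b0 j1 / b1 j1"
    have b1eq: "b1 = (\<lambda>j. \<beta> * b0 j)"
    proof
      fix j show "b1 j = \<beta> * b0 j" using Hm[of i1 j] i1 unfolding \<beta>_def by (simp add: field_simps)
    qed
    have a1eq: "a1 = (\<lambda>i. \<alpha> * a0 i)"
    proof
      fix i show "a1 i = \<alpha> * a0 i" using Hm[of i j1] j1 unfolding \<alpha>_def by (simp add: field_simps)
    qed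
    have "(cmod \<beta>)^2 = 1" using S1(4) S0(4) nrm2_scale[of \<beta> b0] b1eq by simp
    hence bb: "cnj \<beta> * \<beta> = 1"
      by (metis mult.commute mult_cnj_of_real of_real_1)
    have an: "\<alpha> \<noteq> 0" using i1 a1eq by auto
    have t0: "tensor a0 b0 \<in> l2" by (rule tensor_l2[OF S0(1,2)])
    have teq: "tensor a1 b1 = (\<lambda>p. (\<alpha> * \<beta>) * tensor a0 b0 p)"
      by (auto simp: fun_eq_iff a1eq b1eq tensor_def mult_ac)
    have Aeq: "A (tensor a1 b1) = (\<lambda>p. (\<alpha> * \<beta>) * A (tensor a0 b0) p)"
      unfolding teq by (rule herm_D(3)[OF herm t0])
    have "complex_of_real g1 * a1 i0 = (\<Sum>\<^sub>\<infinity>j. cnj (b1 j) * A (tensor a1 b1) (i0, j))"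
      using fun_cong[OF S1(5), of i0] by simp
    also have "\<dots> = (\<Sum>\<^sub>\<infinity>j. (cnj \<beta> * \<beta> * \<alpha>) * (cnj (b0 j) * A (tensor a0 b0) (i0, j)))"
      unfolding Aeq by (simp add: b1eq mult_ac)
    also have "\<dots> = \<alpha> * (\<Sum>\<^sub>\<infinity>j. cnj (b0 j) * A (tensor a0 b0) (i0, j))"
      by (simp add: infsum_cmult_right' bb)
    also have "\<dots> = \<alpha> * (complex_of_real g0 * a0 i0)"
      using fun_cong[OF S0(5), of i0] by simp
    finally have "complex_of_real g1 * (\<alpha> * a0 i0) = complex_of_real g0 * (\<alpha> * a0 i0)"
      by (simp add: a1eq mult_ac)
    with an i0 have "complex_of_real g1 = complex_of_real g0" by simp
    with ne show False by simp
  qed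
  have "c * (a0 i0 * b0 j0) = 0" using Hp[of i0 j0] d0 by simp
  with i0 j0 have "c = 0" by simp
  with d0 show ?thesis by simp
qed



theorem proposition1:
  fixes A :: "('i \<times> 'j \<Rightarrow> complex) \<Rightarrow> ('i \<times> 'j \<Rightarrow> complex)"
    and g0 :: real and a0 :: "'i \<Rightarrow> complex" and b0 :: "'j \<Rightarrow> complex"
  assumes herm: "hermitian_op A"
    and sol0: "sep_eigen A g0 a0 b0"
  shows "(\<forall>(ea :: 'k \<Rightarrow> 'i \<Rightarrow> complex) (eb :: 'l \<Rightarrow> 'j \<Rightarrow> complex) k0 l0.
            orthonormal_basis ea \<and> orthonormal_basis eb \<and> ea k0 = a0 \<and> eb l0 = b0 \<longrightarrow>
            (\<exists>\<psi> :: 'k \<Rightarrow> 'l \<Rightarrow> complex.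
               l2_sums (\<lambda>(k, l). (\<lambda>x. \<psi> k l * tensor (ea k) (eb l) x))
                       ({k. k \<noteq> k0} \<times> {l. l \<noteq> l0})
                       (A (tensor a0 b0) - (\<lambda>x. complex_of_real g0 * tensor a0 b0 x))))
       \<and> (\<forall>g1 a1. g1 \<noteq> g0 \<and> sep_eigen A g1 a1 b0 \<longrightarrow> l2_inner a0 a1 = 0)
       \<and> (\<forall>g1 b1. g1 \<noteq> g0 \<and> sep_eigen A g1 a0 b1 \<longrightarrow> l2_inner b0 b1 = 0)
       \<and> (\<forall>g1 a1 b1. g1 \<noteq> g0 \<and> sep_eigen A g1 a1 b1 \<longrightarrow>
            (\<forall>c d :: complex.
               (\<lambda>x. c * tensor a0 b0 x + d * tensor a1 b1 x) = 0 \<longrightarrow> c = 0 \<and> d = 0))"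
  proof (intro conjI allI impI)
  fix ea :: "'k \<Rightarrow> 'i \<Rightarrow> complex" and eb :: "'l \<Rightarrow> 'j \<Rightarrow> complex" and k0 l0
  assume h: "orthonormal_basis ea \<and> orthonormal_basis eb \<and> ea k0 = a0 \<and> eb l0 = b0"
  show "\<exists>\<psi> :: 'k \<Rightarrow> 'l \<Rightarrow> complex.
               l2_sums (\<lambda>(k, l). (\<lambda>x. \<psi> k l * tensor (ea k) (eb l) x))
                       ({k. k \<noteq> k0} \<times> {l. l \<noteq> l0})
                       (A (tensor a0 b0) - (\<lambda>x. complex_of_real g0 * tensor a0 b0 x))"
    using h by (intro part1[OF herm sol0]) simp_all
next
  fix g1 a1 assume "g1 \<noteq> g0 \<and> sep_eigen A g1 a1 b0"
  then show "l2_inner a0 a1 = 0" by (intro part2[OF herm sol0, of g1]) simp_all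
next
  fix g1 b1 assume "g1 \<noteq> g0 \<and> sep_eigen A g1 a0 b1"
  then show "l2_inner b0 b1 = 0" by (intro part3[OF herm sol0, of g1]) simp_all
next
  fix g1 a1 b1 c d
  assume h1: "g1 \<noteq> g0 \<and> sep_eigen A g1 a1 b1" and h2: "(\<lambda>x. c * tensor a0 b0 x + d * tensor a1 b1 x) = 0"
  have "c = 0 \<and> d = 0" using h1 by (intro part4[OF herm sol0 _ _ h2, of g1]) simp_all
  then show "c = 0" "d = 0" by simp_all
qed

end
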